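(* Let $\Gamma$ be an environment as in the context and let $c_1,c_2,c_1',c_2'$ be finite sets of constraints with $(c_1,c_2)\longrightarrow_\Gamma^* (c_1',c_2')$. Then: (i) for every $x\in\mathrm{dom}(\phi_\ell(c_1'\cup c_2'))$ there exists a recipe $R$ with $\mathrm{vars}(R)\subseteq \mathrm{dom}(\phi^\Gamma_{\mathtt{LL}}\cup\phi_\ell(c_1\cup c_2))$ such that $\phi_\ell(c_1'\cup c_2')(x) = (R(\phi^\Gamma_{\mathtt{LL}}\cup\phi_\ell(c_1\cup c_2)))\downarrow$ and $\phi_r(c_1'\cup c_2')(x) = (R(\phi^\Gamma_{\mathtt{LL}}\cup\phi_r(c_1\cup c_2)))\downarrow$; (ii) conversely, for every $x\in\mathrm{dom}(\phi_\ell(c_1\cup c_2))$ there exists a recipe $R$ in which none of the symbols $\mathtt{dec},\mathtt{adec},\mathtt{checksign},\pi_1,\pi_2$ occurs, with $\mathrm{vars}(R)\subseteq \mathrm{dom}(\phi^\Gamma_{\mathtt{LL}}\cup\phi_\ell(c_1'\cup c_2'))$, such that $\phi_\ell(c_1\cup c_2)(x) = R(\phi^\Gamma_{\mathtt{LL}}\cup\phi_\ell(c_1'\cup c_2'))$ and $\phi_r(c_1\cup c_2)(x) = R(\phi^\Gamma_{\mathtt{LL}}\cup\phi_r(c_1'\cup c_2'))$.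
   Context: Fix disjoint infinite sets: names $\mathcal{N}=\mathcal{FN}\uplus\mathcal{BN}$ (free names, usable by the attacker, and bound names), keys $\mathcal{K}$, constants $\mathcal{C}$, variables $\mathcal{V}=\mathcal{X}\uplus\mathcal{AX}$. Constructors are $\mathtt{pk},\mathtt{vk},\mathtt{h}$ (unary) and $\mathtt{enc},\mathtt{aenc},\mathtt{sign},\langle\cdot,\cdot\rangle$ (binary); destructors are $\pi_1,\pi_2$ (unary) and $\mathtt{dec},\mathtt{adec},\mathtt{checksign}$ (binary). Terms are built from these symbols over $\mathcal{N}\cup\mathcal{K}\cup\mathcal{C}\cup\mathcal{V}$. A message is a term using only constructors, constants, names, keys and variables, such that every subterm $\mathtt{pk}(t'),\mathtt{vk}(t'),\mathtt{enc}(t_1,t'),\mathtt{sign}(t_1,t')$ has $t'\in\mathcal{K}$ and every subterm $\mathtt{aenc}(t_1,t_2)$ has $t_2=\mathtt{pk}(k)$ with $k\in\mathcal{K}$. The evaluation $t\downarrow$ (a term or the failure value $\bot$) is: $u\downarrow=u$ for $u\in\mathcal{N}\cup\mathcal{V}\cup\mathcal{K}\cup\mathcal{C}$; $\mathtt{pk}(t)\downarrow=\mathtt{pk}(t\downarrow)$ and $\mathtt{vk}(t)\downarrow=\mathtt{vk}(t\downarrow)$ if $t\downarrow\in\mathcal{K}$; $\mathtt{h}(t)\downarrow=\mathtt{h}(t\downarrow)$ if $t\downarrow\neq\bot$; $\langle t_1,t_2\rangle\downarrow=\langle t_1\downarrow,t_2\downarrow\rangle$ if both are $\neq\bot$; $\mathtt{enc}(t_1,t_2)\downarrow=\mathtt{enc}(t_1\downarrow,t_2\downarrow)$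 and $\mathtt{sign}(t_1,t_2)\downarrow=\mathtt{sign}(t_1\downarrow,t_2\downarrow)$ if $t_1\downarrow\neq\bot$ and $t_2\downarrow\in\mathcal{K}$; $\mathtt{aenc}(t_1,t_2)\downarrow=\mathtt{aenc}(t_1\downarrow,t_2\downarrow)$ if $t_1\downarrow\neq\bot$ and $t_2\downarrow=\mathtt{pk}(k)$ for some $k\in\mathcal{K}$; $\pi_1(t)\downarrow=t_1$ and $\pi_2(t)\downarrow=t_2$ if $t\downarrow=\langle t_1,t_2\rangle$; $\mathtt{dec}(t_1,t_2)\downarrow=t_3$ if $t_1\downarrow=\mathtt{enc}(t_3,t_4)$ and $t_4=t_2\downarrow$; $\mathtt{adec}(t_1,t_2)\downarrow=t_3$ if $t_1\downarrow=\mathtt{aenc}(t_3,\mathtt{pk}(t_4))$ and $t_4=t_2\downarrow$; $\mathtt{checksign}(t_1,t_2)\downarrow=t_3$ if $t_1\downarrow=\mathtt{sign}(t_3,t_4)$ and $t_2\downarrow=\mathtt{vk}(t_4)$; and $t\downarrow=\bot$ in all other cases. A recipe is a term built from constructors, destructors, constants and names in $\mathcal{FN}$ over variables in $\mathcal{AX}$. A frame is a substitution $\phi$ with $\mathrm{dom}(\phi)\subseteq\mathcal{AX}$; $R(\phi)$ denotes the application of $\phi$ to $R$. The environment $\Gamma$ assigns to finitely many keys $k$ a key type $\mathrm{key}^{l}(T)$ and to finitely many nonces $n$ a nonce type $\tau^{l,a}_n$, with labels $l\in\{\mathtt{LL},\mathtt{HL},\mathtt{HH}\}$ and $a\in\{1,\infty\}$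 (only the labels matter here). $\phi^\Gamma_{\mathtt{LL}}$ is a frame (on fresh variables) whose range consists exactly of: every key $k$ with $\Gamma(k)=\mathrm{key}^{\mathtt{LL}}(T)$ for some $T$; $\mathtt{pk}(k)$ and $\mathtt{vk}(k)$ for every key $k\in\mathrm{dom}(\Gamma)$; every nonce $n$ with $\Gamma(n)=\tau^{\mathtt{LL},a}_n$ for some $a$. A constraint is a pair of messages written $u\sim v$. For a finite set $c$ of constraints, $\phi_\ell(c)$ and $\phi_r(c)$ are frames with a common domain, a set of variables of $\mathcal{AX}$ disjoint from $\mathrm{dom}(\phi^\Gamma_{\mathtt{LL}})$ and in bijection with $c$, such that the variable associated with $u\sim v$ is mapped to $u$ by $\phi_\ell(c)$ and to $v$ by $\phi_r(c)$. The relation $\longrightarrow_\Gamma$ on pairs of sets of constraints is defined by (for all $c,c',M,N,M',N'$): $(\{\langle M,N\rangle\sim\langle M',N'\rangle\}\cup c,c')\longrightarrow_\Gamma(\{M\sim M',N\sim N'\}\cup c,c')$; if $\Gamma(k)=\mathrm{key}^{\mathtt{LL}}(T)$ for some $T$: $(\{\mathtt{enc}(M,k)\sim\mathtt{enc}(M',k)\}\cup c,c')\longrightarrow_\Gamma(\{M\sim M'\}\cup c,c')$, $(\{\mathtt{aenc}(M,\mathtt{pk}(k))\sim\mathtt{aenc}(M',\mathtt{pk}(k))\}\cup c,c')\longrightarrow_\Gamma(\{M\sim M'\}\cup c,c')$ and $(\{\mathtt{sign}(M,k)\sim\mathtt{sign}(M',k)\}\cup c,c')\longrightarrow_\Gamma(\{M\sim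 M'\}\cup c,c')$; if $\Gamma(k)=\mathrm{key}^{\mathtt{HH}}(T)$ for some $T$: $(\{\mathtt{sign}(M,k)\sim\mathtt{sign}(M',k)\}\cup c,c')\longrightarrow_\Gamma(\{M\sim M'\}\cup c,\{\mathtt{sign}(M,k)\sim\mathtt{sign}(M',k)\}\cup c')$. $\longrightarrow_\Gamma^*$ is its reflexive transitive closure. *)

theory Defs
  imports Main
begin

datatype nm = FreeN nat | BoundN nat

datatype trm =
    Nm nm | K nat | Cst nat | Xv nat | AXv nat
  | Pk trm | Vk trm | H trm
  | Enc trm trm | Aenc trm trm | Sign trm trm | Pair trm trm
  | Pi1 trm | Pi2 trm | Dec trm trm | Adec trm trm | Checksign trm trm

fun message :: "trm \<Rightarrow> bool" where
  "message (Nm n) = True"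
| "message (K k) = True"
| "message (Cst c) = True"
| "message (Xv x) = True"
| "message (AXv x) = True"
| "message (Pk t) = (\<exists>k. t = K k)"
| "message (Vk t) = (\<exists>k. t = K k)"
| "message (H t) = message t"
| "message (Enc t1 t2) = (message t1 \<and> (\<exists>k. t2 = K k))"
| "message (Sign t1 t2) = (message t1 \<and> (\<exists>k. t2 = K k))"
| "message (Aenc t1 t2) = (message t1 \<and> (\<exists>k. t2 = Pk (K k)))"
| "message (Pair t1 t2) = (message t1 \<and> message t2)"
| "message (Pi1 t) = False"
| "message (Pi2 t) = False"
| "message (Dec t1 t2) = False"
| "message (Adec t1 t2) = False"
| "message (Checksign t1 t2) = False"

(* evaluation; None stands for the failure value \<bottom> *)
fun eval :: "trm \<Rightarrow> trm option" where
  "eval (Nm n) = Some (Nm n)"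
| "eval (K k) = Some (K k)"
| "eval (Cst c) = Some (Cst c)"
| "eval (Xv x) = Some (Xv x)"
| "eval (AXv x) = Some (AXv x)"
| "eval (Pk t) = (case eval t of Some (K k) \<Rightarrow> Some (Pk (K k)) | _ \<Rightarrow> None)"
| "eval (Vk t) = (case eval t of Some (K k) \<Rightarrow> Some (Vk (K k)) | _ \<Rightarrow> None)"
| "eval (H t) = (case eval t of Some u \<Rightarrow> Some (H u) | None \<Rightarrow> None)"
| "eval (Pair t1 t2) = (case (eval t1, eval t2) of
      (Some u1, Some u2) \<Rightarrow> Some (Pair u1 u2) | _ \<Rightarrow> None)"
| "eval (Enc t1 t2) = (case (eval t1, eval t2) of
      (Some u1, Some (K k)) \<Rightarrow> Some (Enc u1 (K k)) | _ \<Rightarrow> None)"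
| "eval (Sign t1 t2) = (case (eval t1, eval t2) of
      (Some u1, Some (K k)) \<Rightarrow> Some (Sign u1 (K k)) | _ \<Rightarrow> None)"
| "eval (Aenc t1 t2) = (case (eval t1, eval t2) of
      (Some u1, Some (Pk (K k))) \<Rightarrow> Some (Aenc u1 (Pk (K k))) | _ \<Rightarrow> None)"
| "eval (Pi1 t) = (case eval t of Some (Pair u1 u2) \<Rightarrow> Some u1 | _ \<Rightarrow> None)"
| "eval (Pi2 t) = (case eval t of Some (Pair u1 u2) \<Rightarrow> Some u2 | _ \<Rightarrow> None)"
| "eval (Dec t1 t2) = (case (eval t1, eval t2) of
      (Some (Enc t3 t4), Some u2) \<Rightarrow> (if t4 = u2 then Some t3 else None) | _ \<Rightarrow> None)"
| "eval (Adec t1 t2) = (case (eval t1, eval t2) of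
      (Some (Aenc t3 (Pk t4)), Some u2) \<Rightarrow> (if t4 = u2 then Some t3 else None) | _ \<Rightarrow> None)"
| "eval (Checksign t1 t2) = (case (eval t1, eval t2) of
      (Some (Sign t3 t4), Some u2) \<Rightarrow> (if u2 = Vk t4 then Some t3 else None) | _ \<Rightarrow> None)"

fun recipe :: "trm \<Rightarrow> bool" where
  "recipe (Nm n) = (\<exists>i. n = FreeN i)"
| "recipe (K k) = False"
| "recipe (Cst c) = True"
| "recipe (Xv x) = False"
| "recipe (AXv x) = True"
| "recipe (Pk t) = recipe t"
| "recipe (Vk t) = recipe t"
| "recipe (H t) = recipe t"
| "recipe (Enc t1 t2) = (recipe t1 \<and> recipe t2)"
| "recipe (Aenc t1 t2) = (recipe t1 \<and> recipe t2)"
| "recipe (Sign t1 t2) = (recipe t1 \<and> recipe t2)"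
| "recipe (Pair t1 t2) = (recipe t1 \<and> recipe t2)"
| "recipe (Pi1 t) = recipe t"
| "recipe (Pi2 t) = recipe t"
| "recipe (Dec t1 t2) = (recipe t1 \<and> recipe t2)"
| "recipe (Adec t1 t2) = (recipe t1 \<and> recipe t2)"
| "recipe (Checksign t1 t2) = (recipe t1 \<and> recipe t2)"

fun no_destr :: "trm \<Rightarrow> bool" where
  "no_destr (Pk t) = no_destr t"
| "no_destr (Vk t) = no_destr t"
| "no_destr (H t) = no_destr t"
| "no_destr (Enc t1 t2) = (no_destr t1 \<and> no_destr t2)"
| "no_destr (Aenc t1 t2) = (no_destr t1 \<and> no_destr t2)"
| "no_destr (Sign t1 t2) = (no_destr t1 \<and> no_destr t2)"
| "no_destr (Pair t1 t2) = (no_destr t1 \<and> no_destr t2)"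
| "no_destr (Pi1 t) = False"
| "no_destr (Pi2 t) = False"
| "no_destr (Dec t1 t2) = False"
| "no_destr (Adec t1 t2) = False"
| "no_destr (Checksign t1 t2) = False"
| "no_destr _ = True"

fun axvars :: "trm \<Rightarrow> nat set" where
  "axvars (AXv x) = {x}"
| "axvars (Pk t) = axvars t"
| "axvars (Vk t) = axvars t"
| "axvars (H t) = axvars t"
| "axvars (Enc t1 t2) = axvars t1 \<union> axvars t2"
| "axvars (Aenc t1 t2) = axvars t1 \<union> axvars t2"
| "axvars (Sign t1 t2) = axvars t1 \<union> axvars t2"
| "axvars (Pair t1 t2) = axvars t1 \<union> axvars t2"
| "axvars (Pi1 t) = axvars t"
| "axvars (Pi2 t) = axvars t"
| "axvars (Dec t1 t2) = axvars t1 \<union> axvars t2"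
| "axvars (Adec t1 t2) = axvars t1 \<union> axvars t2"
| "axvars (Checksign t1 t2) = axvars t1 \<union> axvars t2"
| "axvars _ = {}"

(* frames: partial maps from AX-variable indices to terms *)
type_synonym frame = "nat \<rightharpoonup> trm"

fun app_frame :: "trm \<Rightarrow> frame \<Rightarrow> trm" where
  "app_frame (AXv x) \<phi> = (case \<phi> x of Some t \<Rightarrow> t | None \<Rightarrow> AXv x)"
| "app_frame (Pk t) \<phi> = Pk (app_frame t \<phi>)"
| "app_frame (Vk t) \<phi> = Vk (app_frame t \<phi>)"
| "app_frame (H t) \<phi> = H (app_frame t \<phi>)"
| "app_frame (Enc t1 t2) \<phi> = Enc (app_frame t1 \<phi>) (app_frame t2 \<phi>)"
| "app_frame (Aenc t1 t2) \<phi> = Aenc (app_frame t1 \<phi>) (app_frame t2 \<phi>)"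
| "app_frame (Sign t1 t2) \<phi> = Sign (app_frame t1 \<phi>) (app_frame t2 \<phi>)"
| "app_frame (Pair t1 t2) \<phi> = Pair (app_frame t1 \<phi>) (app_frame t2 \<phi>)"
| "app_frame (Pi1 t) \<phi> = Pi1 (app_frame t \<phi>)"
| "app_frame (Pi2 t) \<phi> = Pi2 (app_frame t \<phi>)"
| "app_frame (Dec t1 t2) \<phi> = Dec (app_frame t1 \<phi>) (app_frame t2 \<phi>)"
| "app_frame (Adec t1 t2) \<phi> = Adec (app_frame t1 \<phi>) (app_frame t2 \<phi>)"
| "app_frame (Checksign t1 t2) \<phi> = Checksign (app_frame t1 \<phi>) (app_frame t2 \<phi>)"
| "app_frame t \<phi> = t"

(* labels; only the labels of the environment types matter *)
datatype label = LL | HL | HH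

(* environment: labels of the key types of keys and of the nonce types of nonces *)
record env =
  key_lab :: "nat \<rightharpoonup> label"
  nonce_lab :: "nm \<rightharpoonup> label"

definition wf_env :: "env \<Rightarrow> bool" where
  "wf_env \<Gamma> \<longleftrightarrow> finite (dom (key_lab \<Gamma>)) \<and> finite (dom (nonce_lab \<Gamma>))"

(* the set of terms forming the range of \<phi>^\<Gamma>_LL *)
definition LL_range :: "env \<Rightarrow> trm set" where
  "LL_range \<Gamma> =
     {K k | k. key_lab \<Gamma> k = Some LL}
   \<union> {Pk (K k) | k. k \<in> dom (key_lab \<Gamma>)}
   \<union> {Vk (K k) | k. k \<in> dom (key_lab \<Gamma>)}
   \<union> {Nm n | n. nonce_lab \<Gamma> n = Some LL}"

type_synonym constr = "trm \<times> trm"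

definition constraint_set :: "constr set \<Rightarrow> bool" where
  "constraint_set c \<longleftrightarrow> finite c \<and> (\<forall>(u, v) \<in> c. message u \<and> message v)"

(* \<phi>_l(c) and \<phi>_r(c) given the chosen bijection \<beta> from the domain D to c *)
definition phi_l :: "(nat \<Rightarrow> constr) \<Rightarrow> nat set \<Rightarrow> frame" where
  "phi_l \<beta> D = (\<lambda>x. if x \<in> D then Some (fst (\<beta> x)) else None)"

definition phi_r :: "(nat \<Rightarrow> constr) \<Rightarrow> nat set \<Rightarrow> frame" where
  "phi_r \<beta> D = (\<lambda>x. if x \<in> D then Some (snd (\<beta> x)) else None)"

inductive step :: "env \<Rightarrow> constr set \<times> constr set \<Rightarrow> constr set \<times> constr set \<Rightarrow> bool"
  for \<Gamma> :: env where
  pair: "step \<Gamma> (insert (Pair M N, Pair M' N') c, c') (insert (M, M') (insert (N, N') c), c')"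
| enc: "key_lab \<Gamma> k = Some LL \<Longrightarrow>
     step \<Gamma> (insert (Enc M (K k), Enc M' (K k)) c, c') (insert (M, M') c, c')"
| aenc: "key_lab \<Gamma> k = Some LL \<Longrightarrow>
     step \<Gamma> (insert (Aenc M (Pk (K k)), Aenc M' (Pk (K k))) c, c') (insert (M, M') c, c')"
| sign_LL: "key_lab \<Gamma> k = Some LL \<Longrightarrow>
     step \<Gamma> (insert (Sign M (K k), Sign M' (K k)) c, c') (insert (M, M') c, c')"
| sign_HH: "key_lab \<Gamma> k = Some HH \<Longrightarrow>
     step \<Gamma> (insert (Sign M (K k), Sign M' (K k)) c, c')
            (insert (M, M') c, insert (Sign M (K k), Sign M' (K k)) c')"

abbreviation steps :: "env \<Rightarrow> constr set \<times> constr set \<Rightarrow> constr set \<times> constr set \<Rightarrow> bool" where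
  "steps \<Gamma> \<equiv> (step \<Gamma>)\<^sup>*\<^sup>*"

end

theory Submission
  imports Defs
begin

definition ded :: "frame \<Rightarrow> frame \<Rightarrow> nat set \<Rightarrow> constr \<Rightarrow> bool" where
  "ded FL FR S p \<longleftrightarrow> (\<exists>R. recipe R \<and> axvars R \<subseteq> S
     \<and> eval (app_frame R FL) = Some (fst p) \<and> eval (app_frame R FR) = Some (snd p))"

definition con :: "frame \<Rightarrow> frame \<Rightarrow> nat set \<Rightarrow> constr \<Rightarrow> bool" where
  "con FL FR S p \<longleftrightarrow> (\<exists>R. recipe R \<and> no_destr R \<and> axvars R \<subseteq> S
     \<and> app_frame R FL = fst p \<and> app_frame R FR = snd p)"

definition keyok :: "env \<Rightarrow> frame \<Rightarrow> frame \<Rightarrow> nat set \<Rightarrow> bool" where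
  "keyok \<Gamma> FL FR S \<longleftrightarrow>
     (\<forall>k. key_lab \<Gamma> k = Some LL \<longrightarrow> (\<exists>y\<in>S. FL y = Some (K k) \<and> FR y = Some (K k)))
   \<and> (\<forall>k\<in>dom (key_lab \<Gamma>). (\<exists>y\<in>S. FL y = Some (Pk (K k)) \<and> FR y = Some (Pk (K k)))
        \<and> (\<exists>y\<in>S. FL y = Some (Vk (K k)) \<and> FR y = Some (Vk (K k))))"

lemma step_ded:
  assumes st: "step \<Gamma> (a, b) (a', b')" and ko: "keyok \<Gamma> FL FR S"
    and h: "\<forall>p\<in>a \<union> b. ded FL FR S p"
  shows "\<forall>p\<in>a' \<union> b'. ded FL FR S p"
  using st
proof (cases rule: step.cases)
  case (pair M N M' N' c)
  have h0: "ded FL FR S (Pair M N, Pair M' N')" using h pair by simp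
  obtain R where R: "recipe R" "axvars R \<subseteq> S"
    "eval (app_frame R FL) = Some (Pair M N)" "eval (app_frame R FR) = Some (Pair M' N')"
    using h0 unfolding ded_def by auto
  have "ded FL FR S (M, M')" unfolding ded_def
    by (rule exI[of _ "Pi1 R"]) (simp add: R)
  moreover have "ded FL FR S (N, N')" unfolding ded_def
    by (rule exI[of _ "Pi2 R"]) (simp add: R)
  ultimately show ?thesis using h pair by auto
next
  case (enc k M M' c)
  have h0: "ded FL FR S (Enc M (K k), Enc M' (K k))" using h enc by simp
  obtain R where R: "recipe R" "axvars R \<subseteq> S"
    "eval (app_frame R FL) = Some (Enc M (K k))" "eval (app_frame R FR) = Some (Enc M' (K k))"
    using h0 unfolding ded_def by auto
  obtain y where y: "y \<in> S" "FL y = Some (K k)" "FR y = Some (K k)"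
    using ko \<open>key_lab \<Gamma> k = Some LL\<close> unfolding keyok_def by blast
  have "ded FL FR S (M, M')" unfolding ded_def
    by (rule exI[of _ "Dec R (AXv y)"]) (simp add: R y)
  then show ?thesis using h enc by auto
next
  case (aenc k M M' c)
  have h0: "ded FL FR S (Aenc M (Pk (K k)), Aenc M' (Pk (K k)))" using h aenc by simp
  obtain R where R: "recipe R" "axvars R \<subseteq> S"
    "eval (app_frame R FL) = Some (Aenc M (Pk (K k)))"
    "eval (app_frame R FR) = Some (Aenc M' (Pk (K k)))"
    using h0 unfolding ded_def by auto
  obtain y where y: "y \<in> S" "FL y = Some (K k)" "FR y = Some (K k)"
    using ko \<open>key_lab \<Gamma> k = Some LL\<close> unfolding keyok_def by blast
  have "ded FL FR S (M, M')" unfolding ded_def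
    by (rule exI[of _ "Adec R (AXv y)"]) (simp add: R y)
  then show ?thesis using h aenc by auto
next
  case (sign_LL k M M' c)
  have h0: "ded FL FR S (Sign M (K k), Sign M' (K k))" using h sign_LL by simp
  obtain R where R: "recipe R" "axvars R \<subseteq> S"
    "eval (app_frame R FL) = Some (Sign M (K k))" "eval (app_frame R FR) = Some (Sign M' (K k))"
    using h0 unfolding ded_def by auto
  obtain y where y: "y \<in> S" "FL y = Some (Vk (K k))" "FR y = Some (Vk (K k))"
    using ko \<open>key_lab \<Gamma> k = Some LL\<close> unfolding keyok_def by blast
  have "ded FL FR S (M, M')" unfolding ded_def
    by (rule exI[of _ "Checksign R (AXv y)"]) (simp add: R y)
  then show ?thesis using h sign_LL by auto
next
  case (sign_HH k M M' c)
  have h0: "ded FL FR S (Sign M (K k), Sign M' (K k))" using h sign_HH by simp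
  obtain R where R: "recipe R" "axvars R \<subseteq> S"
    "eval (app_frame R FL) = Some (Sign M (K k))" "eval (app_frame R FR) = Some (Sign M' (K k))"
    using h0 unfolding ded_def by auto
  obtain y where y: "y \<in> S" "FL y = Some (Vk (K k))" "FR y = Some (Vk (K k))"
    using ko \<open>key_lab \<Gamma> k = Some HH\<close> unfolding keyok_def by blast
  have "ded FL FR S (M, M')" unfolding ded_def
    by (rule exI[of _ "Checksign R (AXv y)"]) (simp add: R y)
  then show ?thesis using h sign_HH by auto
qed

lemma steps_ded:
  assumes "steps \<Gamma> x z" "keyok \<Gamma> FL FR S"
    "\<forall>p\<in>fst x \<union> snd x. ded FL FR S p"
  shows "\<forall>p\<in>fst z \<union> snd z. ded FL FR S p"
  using assms
proof (induction rule: rtranclp_induct)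
  case base then show ?case by simp
next
  case (step y z)
  have st: "step \<Gamma> (fst y, snd y) (fst z, snd z)" using step.hyps(2) by simp
  have ih: "\<forall>p\<in>fst y \<union> snd y. ded FL FR S p" using step.IH step.prems by blast
  show ?case using step_ded[OF st step.prems(1) ih] .
qed

lemma step_con:
  assumes st: "step \<Gamma> (a, b) (a', b')" and ko: "keyok \<Gamma> FL FR S"
    and h: "\<forall>p\<in>a' \<union> b'. con FL FR S p"
  shows "\<forall>p\<in>a \<union> b. con FL FR S p"
  using st
proof (cases rule: step.cases)
  case (pair M N M' N' c)
  obtain R1 where R1: "recipe R1" "no_destr R1" "axvars R1 \<subseteq> S"
    "app_frame R1 FL = M" "app_frame R1 FR = M'"
    using h pair unfolding con_def by fastforce
  obtain R2 where R2: "recipe R2" "no_destr R2" "axvars R2 \<subseteq> S"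
    "app_frame R2 FL = N" "app_frame R2 FR = N'"
    using h pair unfolding con_def by fastforce
  have "con FL FR S (Pair M N, Pair M' N')" unfolding con_def
    by (rule exI[of _ "Pair R1 R2"]) (simp add: R1 R2)
  then show ?thesis using h pair by auto
next
  case (enc k M M' c)
  obtain R where R: "recipe R" "no_destr R" "axvars R \<subseteq> S"
    "app_frame R FL = M" "app_frame R FR = M'"
    using h enc unfolding con_def by fastforce
  obtain y where y: "y \<in> S" "FL y = Some (K k)" "FR y = Some (K k)"
    using ko \<open>key_lab \<Gamma> k = Some LL\<close> unfolding keyok_def by blast
  have "con FL FR S (Enc M (K k), Enc M' (K k))" unfolding con_def
    by (rule exI[of _ "Enc R (AXv y)"]) (simp add: R y)
  then show ?thesis using h enc by auto
next
  case (aenc k M M' c)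
  obtain R where R: "recipe R" "no_destr R" "axvars R \<subseteq> S"
    "app_frame R FL = M" "app_frame R FR = M'"
    using h aenc unfolding con_def by fastforce
  obtain y where y: "y \<in> S" "FL y = Some (Pk (K k))" "FR y = Some (Pk (K k))"
    using ko \<open>key_lab \<Gamma> k = Some LL\<close> unfolding keyok_def by blast
  have "con FL FR S (Aenc M (Pk (K k)), Aenc M' (Pk (K k)))" unfolding con_def
    by (rule exI[of _ "Aenc R (AXv y)"]) (simp add: R y)
  then show ?thesis using h aenc by auto
next
  case (sign_LL k M M' c)
  obtain R where R: "recipe R" "no_destr R" "axvars R \<subseteq> S"
    "app_frame R FL = M" "app_frame R FR = M'"
    using h sign_LL unfolding con_def by fastforce
  obtain y where y: "y \<in> S" "FL y = Some (K k)" "FR y = Some (K k)"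
    using ko \<open>key_lab \<Gamma> k = Some LL\<close> unfolding keyok_def by blast
  have "con FL FR S (Sign M (K k), Sign M' (K k))" unfolding con_def
    by (rule exI[of _ "Sign R (AXv y)"]) (simp add: R y)
  then show ?thesis using h sign_LL by auto
next
  case (sign_HH k M M' c)
  then show ?thesis using h by auto
qed

lemma steps_con:
  assumes "steps \<Gamma> x z" "keyok \<Gamma> FL FR S"
    "\<forall>p\<in>fst z \<union> snd z. con FL FR S p"
  shows "\<forall>p\<in>fst x \<union> snd x. con FL FR S p"
  using assms
proof (induction rule: converse_rtranclp_induct)
  case base then show ?case by simp
next
  case (step x y)
  have st: "step \<Gamma> (fst x, snd x) (fst y, snd y)" using step.hyps(1) by simp
  have ih: "\<forall>p\<in>fst y \<union> snd y. con FL FR S p" using step.IH step.prems by blast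
  show ?case using step_con[OF st step.prems(1) ih] .
qed

lemma msg_eval: "message t \<Longrightarrow> eval t = Some t"
  by (induction t) auto

lemma keyok_frames:
  assumes "ran \<phi>LL = LL_range \<Gamma>" "D \<inter> dom \<phi>LL = {}"
  shows "keyok \<Gamma> (\<phi>LL ++ phi_l \<beta> D) (\<phi>LL ++ phi_r \<beta> D) (dom \<phi>LL \<union> D)"
proof -
  have gen: "\<exists>y\<in>dom \<phi>LL \<union> D. (\<phi>LL ++ phi_l \<beta> D) y = Some t \<and> (\<phi>LL ++ phi_r \<beta> D) y = Some t"
    if "t \<in> LL_range \<Gamma>" for t
  proof -
    from that assms(1) have "t \<in> ran \<phi>LL" by simp
    then obtain y where y: "\<phi>LL y = Some t" by (auto simp: ran_def)
    then have "y \<notin> D" using assms(2) by auto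
    then show ?thesis using y
      by (intro bexI[of _ y]) (auto simp: map_add_def phi_l_def phi_r_def)
  qed
  show ?thesis unfolding keyok_def
    by (intro conjI allI impI ballI gen) (auto simp: LL_range_def)
qed

theorem lemmaB39:
  fixes \<Gamma> :: env and c1 c2 c1' c2' :: "constr set"
    and \<phi>LL :: frame
    and \<beta> \<beta>' :: "nat \<Rightarrow> constr" and D D' :: "nat set"
  assumes "wf_env \<Gamma>"
    and "finite (dom \<phi>LL)" and "ran \<phi>LL = LL_range \<Gamma>"
    and "constraint_set c1" and "constraint_set c2"
    and "constraint_set c1'" and "constraint_set c2'"
    and "bij_betw \<beta> D (c1 \<union> c2)" and "D \<inter> dom \<phi>LL = {}"
    and "bij_betw \<beta>' D' (c1' \<union> c2')" and "D' \<inter> dom \<phi>LL = {}"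
    and "steps \<Gamma> (c1, c2) (c1', c2')"
  shows "(\<forall>x \<in> dom (phi_l \<beta>' D'). \<exists>R. recipe R
            \<and> axvars R \<subseteq> dom (\<phi>LL ++ phi_l \<beta> D)
            \<and> phi_l \<beta>' D' x = eval (app_frame R (\<phi>LL ++ phi_l \<beta> D))
            \<and> phi_r \<beta>' D' x = eval (app_frame R (\<phi>LL ++ phi_r \<beta> D)))
       \<and> (\<forall>x \<in> dom (phi_l \<beta> D). \<exists>R. recipe R \<and> no_destr R
            \<and> axvars R \<subseteq> dom (\<phi>LL ++ phi_l \<beta>' D')
            \<and> phi_l \<beta> D x = Some (app_frame R (\<phi>LL ++ phi_l \<beta>' D'))
            \<and> phi_r \<beta> D x = Some (app_frame R (\<phi>LL ++ phi_r \<beta>' D')))"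
proof
  have domD: "dom (\<phi>LL ++ phi_l \<beta> D) = dom \<phi>LL \<union> D"
    by (auto simp: phi_l_def split: if_splits)
  have domD': "dom (\<phi>LL ++ phi_l \<beta>' D') = dom \<phi>LL \<union> D'"
    by (auto simp: phi_l_def split: if_splits)
  have k1: "keyok \<Gamma> (\<phi>LL ++ phi_l \<beta> D) (\<phi>LL ++ phi_r \<beta> D) (dom \<phi>LL \<union> D)"
    using keyok_frames assms(3,9) .
  have k2: "keyok \<Gamma> (\<phi>LL ++ phi_l \<beta>' D') (\<phi>LL ++ phi_r \<beta>' D') (dom \<phi>LL \<union> D')"
    using keyok_frames assms(3,11) .
  have base1: "\<forall>p\<in>c1 \<union> c2. ded (\<phi>LL ++ phi_l \<beta> D) (\<phi>LL ++ phi_r \<beta> D) (dom \<phi>LL \<union> D) p"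
  proof
    fix p assume p: "p \<in> c1 \<union> c2"
    then obtain y where y: "y \<in> D" "\<beta> y = p" using assms(8) p by (metis bij_betw_imp_surj_on imageE)
    have m: "message (fst p)" "message (snd p)"
      using p assms(4,5) by (auto simp: constraint_set_def)
    show "ded (\<phi>LL ++ phi_l \<beta> D) (\<phi>LL ++ phi_r \<beta> D) (dom \<phi>LL \<union> D) p"
      unfolding ded_def
      by (rule exI[of _ "AXv y"]) (simp add: y m msg_eval phi_l_def phi_r_def map_add_def)
  qed
  have d1: "\<forall>p\<in>c1' \<union> c2'. ded (\<phi>LL ++ phi_l \<beta> D) (\<phi>LL ++ phi_r \<beta> D) (dom \<phi>LL \<union> D) p"
    using steps_ded[OF assms(12) k1] base1 by simp
  show "\<forall>x \<in> dom (phi_l \<beta>' D'). \<exists>R. recipe R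
            \<and> axvars R \<subseteq> dom (\<phi>LL ++ phi_l \<beta> D)
            \<and> phi_l \<beta>' D' x = eval (app_frame R (\<phi>LL ++ phi_l \<beta> D))
            \<and> phi_r \<beta>' D' x = eval (app_frame R (\<phi>LL ++ phi_r \<beta> D))"
  proof
    fix x assume "x \<in> dom (phi_l \<beta>' D')"
    then have x: "x \<in> D'" by (auto simp: phi_l_def split: if_splits)
    then have "\<beta>' x \<in> c1' \<union> c2'" using assms(10) by (metis bij_betw_apply)
    then show "\<exists>R. recipe R
            \<and> axvars R \<subseteq> dom (\<phi>LL ++ phi_l \<beta> D)
            \<and> phi_l \<beta>' D' x = eval (app_frame R (\<phi>LL ++ phi_l \<beta> D))
            \<and> phi_r \<beta>' D' x = eval (app_frame R (\<phi>LL ++ phi_r \<beta> D))"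
    proof -
      assume b: "\<beta>' x \<in> c1' \<union> c2'"
      obtain R where R: "recipe R" "axvars R \<subseteq> dom \<phi>LL \<union> D"
        "eval (app_frame R (\<phi>LL ++ phi_l \<beta> D)) = Some (fst (\<beta>' x))"
        "eval (app_frame R (\<phi>LL ++ phi_r \<beta> D)) = Some (snd (\<beta>' x))"
        using d1 b unfolding ded_def by blast
      have eqs: "phi_l \<beta>' D' x = Some (fst (\<beta>' x))" "phi_r \<beta>' D' x = Some (snd (\<beta>' x))"
        using x by (auto simp: phi_l_def phi_r_def)
      show ?thesis unfolding domD by (rule exI[of _ R]) (simp add: eqs R)
    qed
  qed
  have base2: "\<forall>p\<in>c1' \<union> c2'. con (\<phi>LL ++ phi_l \<beta>' D') (\<phi>LL ++ phi_r \<beta>' D') (dom \<phi>LL \<union> D') p"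
  proof
    fix p assume p: "p \<in> c1' \<union> c2'"
    then obtain y where y: "y \<in> D'" "\<beta>' y = p" using assms(10) p by (metis bij_betw_imp_surj_on imageE)
    show "con (\<phi>LL ++ phi_l \<beta>' D') (\<phi>LL ++ phi_r \<beta>' D') (dom \<phi>LL \<union> D') p"
      unfolding con_def
      by (rule exI[of _ "AXv y"]) (simp add: y phi_l_def phi_r_def map_add_def)
  qed
  have d2: "\<forall>p\<in>c1 \<union> c2. con (\<phi>LL ++ phi_l \<beta>' D') (\<phi>LL ++ phi_r \<beta>' D') (dom \<phi>LL \<union> D') p"
    using steps_con[OF assms(12) k2] base2 by simp
  show "\<forall>x \<in> dom (phi_l \<beta> D). \<exists>R. recipe R \<and> no_destr R
            \<and> axvars R \<subseteq> dom (\<phi>LL ++ phi_l \<beta>' D')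
            \<and> phi_l \<beta> D x = Some (app_frame R (\<phi>LL ++ phi_l \<beta>' D'))
            \<and> phi_r \<beta> D x = Some (app_frame R (\<phi>LL ++ phi_r \<beta>' D'))"
  proof
    fix x assume "x \<in> dom (phi_l \<beta> D)"
    then have x: "x \<in> D" by (auto simp: phi_l_def split: if_splits)
    then have "\<beta> x \<in> c1 \<union> c2" using assms(8) by (metis bij_betw_apply)
    then show "\<exists>R. recipe R \<and> no_destr R
            \<and> axvars R \<subseteq> dom (\<phi>LL ++ phi_l \<beta>' D')
            \<and> phi_l \<beta> D x = Some (app_frame R (\<phi>LL ++ phi_l \<beta>' D'))
            \<and> phi_r \<beta> D x = Some (app_frame R (\<phi>LL ++ phi_r \<beta>' D'))"
    proof -
      assume b: "\<beta> x \<in> c1 \<union> c2"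
      obtain R where R: "recipe R" "no_destr R" "axvars R \<subseteq> dom \<phi>LL \<union> D'"
        "app_frame R (\<phi>LL ++ phi_l \<beta>' D') = fst (\<beta> x)"
        "app_frame R (\<phi>LL ++ phi_r \<beta>' D') = snd (\<beta> x)"
        using d2 b unfolding con_def by blast
      have eqs: "phi_l \<beta> D x = Some (fst (\<beta> x))" "phi_r \<beta> D x = Some (snd (\<beta> x))"
        using x by (auto simp: phi_l_def phi_r_def)
      show ?thesis unfolding domD' by (rule exI[of _ R]) (simp add: eqs R)
    qed
  qed
qed

end
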